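(* For $n>2$, there is no non-vanishing real exterior $3$-form on $\mathbb{C}^{n+1}=\mathbb{R}^{n+1}+i\mathbb{R}^{n+1}$ (viewed as a real vector space) invariant under the action of ${\sf SO}(1,n)$.
   Context: ${\sf SO}(1,n)$ is the special orthogonal group of the Lorentz form $-x_0^2+x_1^2+\dots+x_n^2$ on $\mathbb{R}^{n+1}$, acting on $\mathbb{C}^{n+1}=\mathbb{R}^{n+1}+i\mathbb{R}^{n+1}$ diagonally by $A(x+iy)=Ax+iAy$. *)

theory Defs
  imports Complex_Main "Jordan_Normal_Form.Determinant"
begin

definition lorentz_mat :: "nat \<Rightarrow> real mat" where
  "lorentz_mat n = mat (n+1) (n+1) (\<lambda>(i,j). if i = j then (if i = 0 then -1 else 1) else 0)"

definition SO1 :: "nat \<Rightarrow> real mat set" where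
  "SO1 n = {A \<in> carrier_mat (n+1) (n+1).
              transpose_mat A * lorentz_mat n * A = lorentz_mat n \<and> det A = 1}"

text \<open>Diagonal action on C^(n+1) = R^(n+1) + i R^(n+1): A(x+iy) = Ax + iAy.\<close>
definition so_act :: "real mat \<Rightarrow> complex vec \<Rightarrow> complex vec" where
  "so_act A z = map_mat complex_of_real A *\<^sub>v z"

definition real_3form :: "nat \<Rightarrow> (complex vec \<Rightarrow> complex vec \<Rightarrow> complex vec \<Rightarrow> real) \<Rightarrow> bool" where
  "real_3form n \<omega> \<longleftrightarrow>
    (let V = carrier_vec (n+1) :: complex vec set in
     (\<forall>a b :: real. \<forall>u\<in>V. \<forall>v\<in>V. \<forall>w\<in>V. \<forall>t\<in>V.
        \<omega> (of_real a \<cdot>\<^sub>v u + of_real b \<cdot>\<^sub>v v) w t = a * \<omega> u w t + b * \<omega> v w t \<and>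
        \<omega> w (of_real a \<cdot>\<^sub>v u + of_real b \<cdot>\<^sub>v v) t = a * \<omega> w u t + b * \<omega> w v t \<and>
        \<omega> w t (of_real a \<cdot>\<^sub>v u + of_real b \<cdot>\<^sub>v v) = a * \<omega> w t u + b * \<omega> w t v) \<and>
     (\<forall>u\<in>V. \<forall>v\<in>V. \<omega> u u v = 0 \<and> \<omega> u v u = 0 \<and> \<omega> v u u = 0))"

definition so_invariant :: "nat \<Rightarrow> (complex vec \<Rightarrow> complex vec \<Rightarrow> complex vec \<Rightarrow> real) \<Rightarrow> bool" where
  "so_invariant n \<omega> \<longleftrightarrow>
    (\<forall>A\<in>SO1 n. \<forall>u\<in>carrier_vec (n+1). \<forall>v\<in>carrier_vec (n+1). \<forall>w\<in>carrier_vec (n+1).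
       \<omega> (so_act A u) (so_act A v) (so_act A w) = \<omega> u v w)"

end

theory Submission
  imports Defs
begin

definition Pc :: "nat \<Rightarrow> nat \<Rightarrow> complex vec \<Rightarrow> complex vec" where
  "Pc n i u = vec (n+1) (\<lambda>t. if t = i then u $ t else 0)"

definition Rc :: "nat \<Rightarrow> nat set \<Rightarrow> complex vec \<Rightarrow> complex vec" where
  "Rc n I u = vec (n+1) (\<lambda>t. if t \<in> I then u $ t else 0)"

lemma Pc_carrier[simp]: "Pc n i u \<in> carrier_vec (n+1)"
  unfolding Pc_def by simp

lemma Pc_carrier'[simp]: "Pc n i u \<in> carrier_vec (Suc n)"
  unfolding Pc_def by simp

lemma expand_gen:
  fixes f :: "complex vec \<Rightarrow> real"
  assumes add: "\<And>x y. x \<in> carrier_vec (n+1) \<Longrightarrow> y \<in> carrier_vec (n+1) \<Longrightarrow> f (x+y) = f x + f y"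
    and zero: "f (0\<^sub>v (n+1)) = 0"
    and fin: "finite I"
  shows "f (Rc n I u) = (\<Sum>i\<in>I. f (Pc n i u))"
  using fin
proof (induction I rule: finite_induct)
  case empty
  have "Rc n {} u = 0\<^sub>v (n+1)" unfolding Rc_def by auto
  then show ?case using zero by simp
next
  case (insert i I)
  have "Rc n (insert i I) u = Pc n i u + Rc n I u"
    unfolding Rc_def Pc_def using insert.hyps by auto
  moreover have "Rc n I u \<in> carrier_vec (n+1)" unfolding Rc_def by simp
  ultimately show ?case using add[of "Pc n i u" "Rc n I u"] insert Pc_carrier[of n i u] by simp
qed

lemma Rc_all: "u \<in> carrier_vec (n+1) \<Longrightarrow> Rc n {0..<n+1} u = u"
  unfolding Rc_def by auto

lemma
  assumes "real_3form n \<omega>"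
  shows lin1: "\<And>a b u v w t. u \<in> carrier_vec (n+1) \<Longrightarrow> v \<in> carrier_vec (n+1) \<Longrightarrow>
      w \<in> carrier_vec (n+1) \<Longrightarrow> t \<in> carrier_vec (n+1) \<Longrightarrow>
      \<omega> (of_real a \<cdot>\<^sub>v u + of_real b \<cdot>\<^sub>v v) w t = a * \<omega> u w t + b * \<omega> v w t"
  and lin2: "\<And>a b u v w t. u \<in> carrier_vec (n+1) \<Longrightarrow> v \<in> carrier_vec (n+1) \<Longrightarrow>
      w \<in> carrier_vec (n+1) \<Longrightarrow> t \<in> carrier_vec (n+1) \<Longrightarrow>
      \<omega> w (of_real a \<cdot>\<^sub>v u + of_real b \<cdot>\<^sub>v v) t = a * \<omega> w u t + b * \<omega> w v t"
  and lin3: "\<And>a b u v w t. u \<in> carrier_vec (n+1) \<Longrightarrow> v \<in> carrier_vec (n+1) \<Longrightarrow>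
      w \<in> carrier_vec (n+1) \<Longrightarrow> t \<in> carrier_vec (n+1) \<Longrightarrow>
      \<omega> w t (of_real a \<cdot>\<^sub>v u + of_real b \<cdot>\<^sub>v v) = a * \<omega> w t u + b * \<omega> w t v"
  and alt: "\<And>u v. u \<in> carrier_vec (n+1) \<Longrightarrow> v \<in> carrier_vec (n+1) \<Longrightarrow>
      \<omega> u u v = 0 \<and> \<omega> u v u = 0 \<and> \<omega> v u u = 0"
  using assms unfolding real_3form_def Let_def by blast+

lemma sc_eq: "u \<in> carrier_vec (n+1) \<Longrightarrow> (of_real a \<cdot>\<^sub>v u + of_real 0 \<cdot>\<^sub>v u :: complex vec) = of_real a \<cdot>\<^sub>v u"
  by auto

lemma add_eq: "u \<in> carrier_vec (n+1) \<Longrightarrow> v \<in> carrier_vec (n+1) \<Longrightarrow>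
   (of_real 1 \<cdot>\<^sub>v u + of_real 1 \<cdot>\<^sub>v v :: complex vec) = u + v"
  by auto

lemma zero_eq: "u \<in> carrier_vec (n+1) \<Longrightarrow> (of_real 0 \<cdot>\<^sub>v u :: complex vec) = 0\<^sub>v (n+1)"
  by auto

definition sgnf :: "nat \<Rightarrow> nat \<Rightarrow> nat \<Rightarrow> real" where
  "sgnf m l t = (if t = m \<or> t = l then -1 else 1)"

definition Dm :: "nat \<Rightarrow> nat \<Rightarrow> nat \<Rightarrow> real mat" where
  "Dm n m l = mat (n+1) (n+1) (\<lambda>(a,b). if a = b then sgnf m l a else 0)"

lemma diag_mult:
  "mat k k (\<lambda>(a,b). if a = b then x a else 0) * mat k k (\<lambda>(a,b). if a = b then y a else 0)
   = (mat k k (\<lambda>(a,b). if a = b then x a * y a else (0::real)))"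
proof (rule eq_matI)
  fix i j assume ij: "i < dim_row (mat k k (\<lambda>(a,b). if a = b then x a * y a else (0::real)))"
    "j < dim_col (mat k k (\<lambda>(a,b). if a = b then x a * y a else (0::real)))"
  then have "i < k" "j < k" by auto
  then show "(mat k k (\<lambda>(a,b). if a = b then x a else 0) * mat k k (\<lambda>(a,b). if a = b then y a else 0)) $$ (i, j) =
    mat k k (\<lambda>(a,b). if a = b then x a * y a else (0::real)) $$ (i, j)"
    by (simp add: scalar_prod_def if_distrib[of "\<lambda>z. z * _"] cong: if_cong)
qed auto

lemma Dm_SO1:
  assumes "m < n+1" "l < n+1" "m \<noteq> l"
  shows "Dm n m l \<in> SO1 n"
proof -
  have tr: "transpose_mat (Dm n m l) = Dm n m l" unfolding Dm_def by auto
  have L: "lorentz_mat n = mat (n+1) (n+1) (\<lambda>(a,b). if a = b then (if a = 0 then -1 else 1) else 0)"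
    unfolding lorentz_mat_def by (rule cong[of "mat (n+1) (n+1)"]) auto
  have "transpose_mat (Dm n m l) * lorentz_mat n * Dm n m l = lorentz_mat n"
    unfolding tr L unfolding Dm_def diag_mult
    by (rule cong[of "mat (n+1) (n+1)"]) (auto simp: sgnf_def)
  moreover have "det (Dm n m l) = 1"
  proof -
    have ut: "upper_triangular (Dm n m l)" unfolding Dm_def by auto
    have "det (Dm n m l) = prod_list (diag_mat (Dm n m l))"
      by (rule det_upper_triangular[OF ut, of "n+1"]) (unfold Dm_def, rule mat_carrier)
    also have "\<dots> = prod_list (map (sgnf m l) [0..<n+1])"
      unfolding diag_mat_def Dm_def by (rule arg_cong[of _ _ prod_list]) auto
    also have "\<dots> = prod (sgnf m l) {0..<n+1}"
      by (metis distinct_upt prod.distinct_set_conv_list set_upt)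
    also have "\<dots> = (\<Prod>t\<in>{0..<n+1}. (if t = m then -1 else 1) * (if t = l then -1 else 1))"
      using assms by (intro prod.cong) (auto simp: sgnf_def)
    also have "\<dots> = 1" using assms by (simp add: prod.distrib prod.delta)
    finally show ?thesis .
  qed
  ultimately show ?thesis unfolding SO1_def Dm_def by auto
qed

lemma act_Dm: "so_act (Dm n m l) (Pc n i u) = of_real (sgnf m l i) \<cdot>\<^sub>v Pc n i u"
proof (rule eq_vecI)
  fix t assume "t < dim_vec (of_real (sgnf m l i) \<cdot>\<^sub>v Pc n i u)"
  then have t: "t < n+1" by (simp add: Pc_def)
  have "so_act (Dm n m l) (Pc n i u) $ t = (\<Sum>q\<in>{0..<n+1}. of_real (if t = q then sgnf m l t else 0) * (if q = i then u $ q else 0))"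
    using t unfolding so_act_def Dm_def Pc_def by (simp add: scalar_prod_def del: sum.atLeast0_lessThan_Suc)
  also have "\<dots> = (\<Sum>q\<in>{0..<n+1}. if q = i then of_real (if t = i then sgnf m l t else 0) * u $ i else 0)"
    by (rule sum.cong) auto
  also have "\<dots> = (if i \<in> {0..<n+1} then of_real (if t = i then sgnf m l t else 0) * u $ i else 0)"
    by (rule sum.delta) simp
  also have "\<dots> = (of_real (sgnf m l i) \<cdot>\<^sub>v Pc n i u) $ t"
    using t by (auto simp: Pc_def)
  finally show "so_act (Dm n m l) (Pc n i u) $ t = (of_real (sgnf m l i) \<cdot>\<^sub>v Pc n i u) $ t" .
qed (simp add: so_act_def Dm_def Pc_def)


context
  fixes n :: nat and \<omega> :: "complex vec \<Rightarrow> complex vec \<Rightarrow> complex vec \<Rightarrow> real"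
  assumes F: "real_3form n \<omega>"
begin

lemma sc1: "x \<in> carrier_vec (n+1) \<Longrightarrow> y \<in> carrier_vec (n+1) \<Longrightarrow> z \<in> carrier_vec (n+1) \<Longrightarrow>
  \<omega> (of_real a \<cdot>\<^sub>v x) y z = a * \<omega> x y z"
  using lin1[OF F, of x x y z a 0] sc_eq[of x n a] by simp
lemma sc2: "x \<in> carrier_vec (n+1) \<Longrightarrow> y \<in> carrier_vec (n+1) \<Longrightarrow> z \<in> carrier_vec (n+1) \<Longrightarrow>
  \<omega> y (of_real a \<cdot>\<^sub>v x) z = a * \<omega> y x z"
  using lin2[OF F, of x x y z a 0] sc_eq[of x n a] by simp
lemma sc3: "x \<in> carrier_vec (n+1) \<Longrightarrow> y \<in> carrier_vec (n+1) \<Longrightarrow> z \<in> carrier_vec (n+1) \<Longrightarrow>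
  \<omega> y z (of_real a \<cdot>\<^sub>v x) = a * \<omega> y z x"
  using lin3[OF F, of x x y z a 0] sc_eq[of x n a] by simp

lemma ad1: "x \<in> carrier_vec (n+1) \<Longrightarrow> x' \<in> carrier_vec (n+1) \<Longrightarrow> y \<in> carrier_vec (n+1) \<Longrightarrow> z \<in> carrier_vec (n+1) \<Longrightarrow>
  \<omega> (x + x') y z = \<omega> x y z + \<omega> x' y z"
  using lin1[OF F, of x x' y z 1 1] add_eq[of x n x'] by simp
lemma ad2: "x \<in> carrier_vec (n+1) \<Longrightarrow> x' \<in> carrier_vec (n+1) \<Longrightarrow> y \<in> carrier_vec (n+1) \<Longrightarrow> z \<in> carrier_vec (n+1) \<Longrightarrow>
  \<omega> y (x + x') z = \<omega> y x z + \<omega> y x' z"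
  using lin2[OF F, of x x' y z 1 1] add_eq[of x n x'] by simp
lemma ad3: "x \<in> carrier_vec (n+1) \<Longrightarrow> x' \<in> carrier_vec (n+1) \<Longrightarrow> y \<in> carrier_vec (n+1) \<Longrightarrow> z \<in> carrier_vec (n+1) \<Longrightarrow>
  \<omega> y z (x + x') = \<omega> y z x + \<omega> y z x'"
  using lin3[OF F, of x x' y z 1 1] add_eq[of x n x'] by simp

lemma z1: "y \<in> carrier_vec (n+1) \<Longrightarrow> z \<in> carrier_vec (n+1) \<Longrightarrow> \<omega> (0\<^sub>v (n+1)) y z = 0"
  using sc1[of "0\<^sub>v (n+1)" y z 0] zero_eq[of "0\<^sub>v (n+1)" n] by simp
lemma z2: "y \<in> carrier_vec (n+1) \<Longrightarrow> z \<in> carrier_vec (n+1) \<Longrightarrow> \<omega> y (0\<^sub>v (n+1)) z = 0"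
  using sc2[of "0\<^sub>v (n+1)" y z 0] zero_eq[of "0\<^sub>v (n+1)" n] by simp
lemma z3: "y \<in> carrier_vec (n+1) \<Longrightarrow> z \<in> carrier_vec (n+1) \<Longrightarrow> \<omega> y z (0\<^sub>v (n+1)) = 0"
  using sc3[of "0\<^sub>v (n+1)" y z 0] zero_eq[of "0\<^sub>v (n+1)" n] by simp

lemma term_flip:
  assumes I: "so_invariant n \<omega>" and ml: "m < n+1" "l < n+1" "m \<noteq> l"
    and s: "sgnf m l i * sgnf m l j * sgnf m l k = -1"
  shows "\<omega> (Pc n i u) (Pc n j v) (Pc n k w) = 0"
proof -
  have D: "Dm n m l \<in> SO1 n" by (rule Dm_SO1[OF ml])
  have "\<omega> (Pc n i u) (Pc n j v) (Pc n k w) =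
     \<omega> (so_act (Dm n m l) (Pc n i u)) (so_act (Dm n m l) (Pc n j v)) (so_act (Dm n m l) (Pc n k w))"
    using I D unfolding so_invariant_def by (metis Pc_carrier)
  also have "\<dots> = sgnf m l i * sgnf m l j * sgnf m l k * \<omega> (Pc n i u) (Pc n j v) (Pc n k w)"
    unfolding act_Dm
    by (simp add: sc1 sc2 sc3 del: of_real_minus of_real_1)
  also have "\<dots> = - \<omega> (Pc n i u) (Pc n j v) (Pc n k w)" using s by simp
  finally show ?thesis by simp
qed

lemma span2:
  assumes x: "x \<in> carrier_vec (n+1)" and y: "y \<in> carrier_vec (n+1)"
  shows "\<omega> (of_real a1 \<cdot>\<^sub>v x + of_real b1 \<cdot>\<^sub>v y) (of_real a2 \<cdot>\<^sub>v x + of_real b2 \<cdot>\<^sub>v y)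
     (of_real a3 \<cdot>\<^sub>v x + of_real b3 \<cdot>\<^sub>v y) = 0"
  using x y alt[OF F, of x y] alt[OF F, of y x] alt[OF F, of x x] alt[OF F, of y y]
  by (simp add: lin1[OF F] lin2[OF F] lin3[OF F] del: of_real_minus of_real_1 of_real_0)

lemma term_diag:
  assumes i: "i < n+1"
  shows "\<omega> (Pc n i u) (Pc n i v) (Pc n i w) = 0"
proof -
  define e :: "complex vec" where "e = unit_vec (n+1) i"
  define f :: "complex vec" where "f = \<i> \<cdot>\<^sub>v e"
  have ec: "e \<in> carrier_vec (n+1)" and fc: "f \<in> carrier_vec (n+1)" unfolding e_def f_def by auto
  have P: "Pc n i z = of_real (Re (z $ i)) \<cdot>\<^sub>v e + of_real (Im (z $ i)) \<cdot>\<^sub>v f" for z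
    unfolding Pc_def e_def f_def using i by (auto simp: complex_eq_iff)
  show ?thesis unfolding P by (rule span2[OF ec fc])
qed


lemma term_zero:
  assumes I: "so_invariant n \<omega>" and n: "n > 2" and ijk: "i < n+1" "j < n+1" "k < n+1"
  shows "\<omega> (Pc n i u) (Pc n j v) (Pc n k w) = 0"
proof (cases "i = j \<and> j = k")
  case True
  then show ?thesis using term_diag[OF ijk(1)] by simp
next
  case False
  obtain l where l: "l < n+1" "l \<noteq> i" "l \<noteq> j" "l \<noteq> k"
  proof -
    have "\<not> {0..<n+1} \<subseteq> {i,j,k}"
    proof
      assume "{0..<n+1} \<subseteq> {i,j,k}"
      then have "card {0..<n+1} \<le> card {i,j,k}" by (intro card_mono) auto
      also have "\<dots> \<le> 3" by (simp add: card_insert_le_m1)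
      finally show False using n by simp
    qed
    then obtain l where "l \<in> {0..<n+1}" "l \<notin> {i,j,k}" by blast
    then show ?thesis using that by auto
  qed
  obtain m where m: "m \<in> {i,j,k}" "sgnf m l i * sgnf m l j * sgnf m l k = -1"
  proof (cases "i \<noteq> j \<and> i \<noteq> k")
    case True
    then show ?thesis using that[of i] l by (auto simp: sgnf_def)
  next
    case F1: False
    show ?thesis
    proof (cases "j \<noteq> i \<and> j \<noteq> k")
      case True
      then show ?thesis using that[of j] l by (auto simp: sgnf_def)
    next
      case F2: False
      then have "k \<noteq> i \<and> k \<noteq> j" using F1 False by auto
      then show ?thesis using that[of k] l by (auto simp: sgnf_def)
    qed
  qed
  have "m < n+1" "m \<noteq> l" using m(1) ijk l by auto
  then show ?thesis using term_flip[OF I _ l(1) _ m(2)] by blast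
qed

lemma main_expand:
  assumes I: "so_invariant n \<omega>" and n: "n > 2"
    and u: "u \<in> carrier_vec (n+1)" and v: "v \<in> carrier_vec (n+1)" and w: "w \<in> carrier_vec (n+1)"
  shows "\<omega> u v w = 0"
proof -
  let ?I = "{0..<n+1}"
  have e3: "\<omega> x y w = (\<Sum>k\<in>?I. \<omega> x y (Pc n k w))"
    if "x \<in> carrier_vec (n+1)" "y \<in> carrier_vec (n+1)" for x y
  proof -
    have "\<omega> x y (Rc n ?I w) = (\<Sum>k\<in>?I. \<omega> x y (Pc n k w))"
      apply (rule expand_gen[of n "\<lambda>z. \<omega> x y z"])
      apply (rule ad3; (assumption | rule that))
      apply (rule z3; rule that)
      by simp
    then show ?thesis using Rc_all[OF w] by simp
  qed
  have e2: "\<omega> x v z = (\<Sum>j\<in>?I. \<omega> x (Pc n j v) z)"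
    if "x \<in> carrier_vec (n+1)" "z \<in> carrier_vec (n+1)" for x z
  proof -
    have "\<omega> x (Rc n ?I v) z = (\<Sum>j\<in>?I. \<omega> x (Pc n j v) z)"
      apply (rule expand_gen[of n "\<lambda>y. \<omega> x y z"])
      apply (rule ad2; (assumption | rule that))
      apply (rule z2; rule that)
      by simp
    then show ?thesis using Rc_all[OF v] by simp
  qed
  have e1: "\<omega> u y z = (\<Sum>i\<in>?I. \<omega> (Pc n i u) y z)"
    if "y \<in> carrier_vec (n+1)" "z \<in> carrier_vec (n+1)" for y z
  proof -
    have "\<omega> (Rc n ?I u) y z = (\<Sum>i\<in>?I. \<omega> (Pc n i u) y z)"
      apply (rule expand_gen[of n "\<lambda>x. \<omega> x y z"])
      apply (rule ad1; (assumption | rule that))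
      apply (rule z1; rule that)
      by simp
    then show ?thesis using Rc_all[OF u] by simp
  qed
  have "\<omega> u v w = (\<Sum>i\<in>?I. \<omega> (Pc n i u) v w)" using e1 v w by simp
  also have "\<dots> = (\<Sum>i\<in>?I. \<Sum>j\<in>?I. \<omega> (Pc n i u) (Pc n j v) w)"
    by (rule sum.cong[OF refl], rule e2[OF Pc_carrier w])
  also have "\<dots> = (\<Sum>i\<in>?I. \<Sum>j\<in>?I. \<Sum>k\<in>?I. \<omega> (Pc n i u) (Pc n j v) (Pc n k w))"
    by (rule sum.cong[OF refl], rule sum.cong[OF refl], rule e3[OF Pc_carrier Pc_carrier])
  also have "\<dots> = 0"
    using term_zero[OF I n] by (intro sum.neutral ballI) auto
  finally show ?thesis .
qed

end

theorem fact2p2: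
  fixes n :: nat and \<omega> :: "complex vec \<Rightarrow> complex vec \<Rightarrow> complex vec \<Rightarrow> real"
  assumes "n > 2"
    and "real_3form n \<omega>"
    and "so_invariant n \<omega>"
  shows "\<forall>u\<in>carrier_vec (n+1). \<forall>v\<in>carrier_vec (n+1). \<forall>w\<in>carrier_vec (n+1). \<omega> u v w = 0"
  using main_expand[OF assms(2) assms(3) assms(1)] by blast

end
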